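(* Let $q=p^{m_0}$ with $p$ prime, let $A=\mathbb{F}_q[\theta]$, and let $m$ be a positive integer. Then $$\Pi\left(\frac{q^{m+1}-1}{q-1}\right)=\det V(0,[1],\ldots,[m]),$$ where $V(0,[1],\ldots,[m])$ is the $(m+1)\times(m+1)$ matrix whose row indexed by $i\in\{0,1,\ldots,m\}$ is $(1,[i],[i]^2,\ldots,[i]^m)$, with the convention $[0]:=0$ and $0^0=1$ (so the first row is $(1,0,\ldots,0)$).
   Context: For a positive integer $i$, $[i]:=\theta^{q^i}-\theta\in A$. Set $D_0:=1$ and, for $i>0$, $D_i:=[i][i-1]^q\cdots[1]^{q^{i-1}}$ (equivalently $D_i=[i]D_{i-1}^q$). For a nonnegative integer $j$ with $q$-adic expansion $j=\sum_{t=0}^{n}c_tq^t$, $0\le c_t<q$, the Carlitz factorial is $\Pi(j):=\prod_{t=0}^{n}D_t^{c_t}$. In particular $\Pi\left(\frac{q^{m+1}-1}{q-1}\right)=D_0D_1\cdots D_m$. *)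

theory Defs
  imports "HOL-Computational_Algebra.Polynomial" "Jordan_Normal_Form.Determinant"
begin

text \<open>Here A = F_q[theta] is rendered as the polynomial ring over a finite field
  of type 'a, q = card (UNIV :: 'a set), theta = monom 1 1.\<close>

definition theta :: "'a::{finite,field} poly" where
  "theta = monom 1 1"

text \<open>[i] = theta^(q^i) - theta; note [0] = 0 automatically.\<close>
definition brk :: "nat \<Rightarrow> 'a::{finite,field} poly" where
  "brk i = theta ^ (card (UNIV :: 'a set) ^ i) - theta"

fun Dcar :: "nat \<Rightarrow> 'a::{finite,field} poly" where
  "Dcar 0 = 1"
| "Dcar (Suc i) = brk (Suc i) * (Dcar i) ^ card (UNIV :: 'a set)"

text \<open>Carlitz factorial: product over q-adic digits c_t = (j div q^t) mod q.
  Digits with t > j vanish, so the range {..j} covers all digits.\<close>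
definition carlitz_fact :: "nat \<Rightarrow> 'a::{finite,field} poly" where
  "carlitz_fact j = (\<Prod>t\<in>{..j}. Dcar t ^ ((j div card (UNIV :: 'a set) ^ t) mod card (UNIV :: 'a set)))"

end

theory Submission imports Defs "HOL-Number_Theory.Residues" begin

lemma vdm_step_mult:
  fixes x :: "nat \<Rightarrow> 'a::comm_ring_1"
  shows "mat (Suc n) (Suc n) (\<lambda>(i,j). x i ^ j) *
     mat (Suc n) (Suc n) (\<lambda>(k,j). if k = j then 1 else if j = Suc k then - x 0 else 0)
   = mat (Suc n) (Suc n) (\<lambda>(i,j). if j = 0 then 1 else (x i - x 0) * x i ^ (j - 1))"
proof (rule eq_matI)
  fix i j assume i: "i < dim_row (mat (Suc n) (Suc n) (\<lambda>(i,j). if j = 0 then 1 else (x i - x 0) * x i ^ (j - 1)) :: 'a mat)"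
    and j: "j < dim_col (mat (Suc n) (Suc n) (\<lambda>(i,j). if j = 0 then 1 else (x i - x 0) * x i ^ (j - 1)) :: 'a mat)"
  hence i: "i < Suc n" and j: "j < Suc n" by auto
  have s1: "(\<Sum>k\<in>{0..<Suc n}. (if Suc k = j then - x 0 * x i ^ k else 0))
     = (\<Sum>k\<in>{0..<Suc n}. (if k = j - 1 \<and> j > 0 then - x 0 * x i ^ k else 0))"
    by (rule sum.cong) auto
  have s2: "(\<Sum>k\<in>{0..<Suc n}. (if k = j - 1 \<and> j > 0 then - x 0 * x i ^ k else 0)) = (if j = 0 then 0 else - x 0 * x i ^ (j - 1))"
    using j by (cases j) (simp_all add: sum.delta')
  have s3: "(\<Sum>k\<in>{0..<Suc n}. (if k = j then x i ^ k else 0)) = x i ^ j"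
    using j by (simp add: sum.delta')
  have "(mat (Suc n) (Suc n) (\<lambda>(i,j). x i ^ j) *
     mat (Suc n) (Suc n) (\<lambda>(k,j). if k = j then 1 else if j = Suc k then - x 0 else 0)) $$ (i,j)
    = (\<Sum>k\<in>{0..<Suc n}. x i ^ k * (if k = j then 1 else if j = Suc k then - x 0 else 0))"
    using i j by (simp add: scalar_prod_def)
  also have "\<dots> = (\<Sum>k\<in>{0..<Suc n}. (if k = j then x i ^ k else 0) + (if Suc k = j then - x 0 * x i ^ k else 0))"
    by (rule sum.cong) auto
  also have "\<dots> = x i ^ j + (if j = 0 then 0 else - x 0 * x i ^ (j - 1))"
    by (simp only: sum.distrib s1 s2 s3)
  also have "\<dots> = (if j = 0 then 1 else (x i - x 0) * x i ^ (j - 1))"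
    by (cases j) (auto simp: algebra_simps)
  finally show "(mat (Suc n) (Suc n) (\<lambda>(i,j). x i ^ j) *
     mat (Suc n) (Suc n) (\<lambda>(k,j). if k = j then 1 else if j = Suc k then - x 0 else 0)) $$ (i,j)
    = mat (Suc n) (Suc n) (\<lambda>(i,j). if j = 0 then 1 else (x i - x 0) * x i ^ (j - 1)) $$ (i,j)"
    using i j by simp
qed auto

lemma det_E:
  fixes c :: "'a::comm_ring_1"
  shows "det (mat (Suc n) (Suc n) (\<lambda>(k,j). if k = j then 1 else if j = Suc k then c else 0)) = 1"
proof -
  have "det (mat (Suc n) (Suc n) (\<lambda>(k,j). if k = j then 1 else if j = Suc k then c else 0))
     = prod_list (diag_mat (mat (Suc n) (Suc n) (\<lambda>(k,j). if k = j then 1 else if j = Suc k then c else 0)))"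
    by (rule det_upper_triangular) (auto simp: upper_triangular_def)
  also have "\<dots> = 1" by (simp add: prod_list_diag_prod)
  finally show ?thesis .
qed

lemma vandermonde:
  fixes x :: "nat \<Rightarrow> 'a::comm_ring_1"
  shows "det (mat n n (\<lambda>(i,j). x i ^ j)) = (\<Prod>j<n. \<Prod>i<j. x j - x i)"
proof (induction n arbitrary: x)
  case 0
  then show ?case by simp
next
  case (Suc n)
  let ?V = "mat (Suc n) (Suc n) (\<lambda>(i,j). x i ^ j)"
  let ?E = "mat (Suc n) (Suc n) (\<lambda>(k,j). if k = j then 1 else if j = Suc k then - x 0 else 0)"
  let ?W = "mat (Suc n) (Suc n) (\<lambda>(i,j). if j = 0 then 1 else (x i - x 0) * x i ^ (j - 1))"
  have "det ?W = det ?V * det ?E"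
    by (subst vdm_step_mult[symmetric], rule det_mult) auto
  hence dW: "det ?V = det ?W" by (simp add: det_E)
  have "det ?W = (\<Sum>j<Suc n. ?W $$ (0,j) * cofactor ?W 0 j)"
    by (rule laplace_expansion_row) auto
  also have "\<dots> = (\<Sum>j<Suc n. (if j = 0 then cofactor ?W 0 0 else 0))"
    by (rule sum.cong) auto
  also have "\<dots> = det (mat_delete ?W 0 0)" by (simp add: cofactor_def)
  also have "mat_delete ?W 0 0 = mat\<^sub>r n n (\<lambda>i. (x (Suc i) - x 0) \<cdot>\<^sub>v vec n (\<lambda>j. x (Suc i) ^ j))"
    by (rule eq_matI) (auto simp: mat_delete_def)
  also have "det \<dots> = prod (\<lambda>i. x (Suc i) - x 0) {0..<n} * det (mat\<^sub>r n n (\<lambda>i. vec n (\<lambda>j. x (Suc i) ^ j)))"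
    by (rule det_rows_mul) auto
  also have "mat\<^sub>r n n (\<lambda>i. vec n (\<lambda>j. x (Suc i) ^ j)) = mat n n (\<lambda>(i,j). (x \<circ> Suc) i ^ j)"
    by (rule eq_matI) auto
  also have "det \<dots> = (\<Prod>j<n. \<Prod>i<j. (x \<circ> Suc) j - (x \<circ> Suc) i)" by (rule Suc.IH)
  finally have "det ?V = (\<Prod>i<n. x (Suc i) - x 0) * (\<Prod>j<n. \<Prod>i<j. x (Suc j) - x (Suc i))"
    using dW by (simp add: atLeast0LessThan)
  also have "\<dots> = (\<Prod>j<n. \<Prod>i<Suc j. x (Suc j) - x i)"
    by (simp only: prod.lessThan_Suc_shift prod.distrib)
  also have "\<dots> = (\<Prod>j<Suc n. \<Prod>i<j. x j - x i)"
    by (simp only: prod.lessThan_Suc_shift lessThan_0 prod.empty mult_1)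
  finally show ?case .
qed


lemma card_eq_CHAR_pow:
  fixes p m0 :: nat
  assumes "prime p" and "m0 > 0" and "card (UNIV :: ('a::{finite,field}) set) = p ^ m0"
  shows "CHAR('a) = p" "prime CHAR('a)"
proof -
  have pos: "CHAR('a) > 0" by (rule finite_imp_CHAR_pos) simp
  show pr: "prime CHAR('a)" using prime_CHAR_semidom[OF pos] .
  have "CHAR('a) dvd p ^ m0" using CHAR_dvd_CARD[where 'a='a] assms(3) by simp
  hence "CHAR('a) dvd p" using pr prime_dvd_power by blast
  thus "CHAR('a) = p" using pr assms(1) primes_dvd_imp_eq by blast
qed

lemma frob_minus:
  fixes a b :: "'a::{finite,field} poly" and p m0 :: nat
  assumes "prime p" and "m0 > 0" and "card (UNIV :: 'a set) = p ^ m0"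
  shows "(a - b) ^ card (UNIV :: 'a set) = a ^ card (UNIV :: 'a set) - b ^ card (UNIV :: 'a set)"
proof -
  have c: "CHAR('a poly) = p" "prime CHAR('a poly)" using card_eq_CHAR_pow[OF assms] by simp_all
  have "((a - b) + b) ^ card (UNIV :: 'a set) = (a - b) ^ card (UNIV :: 'a set) + b ^ card (UNIV :: 'a set)"
    by (rule freshmans_dream'[OF c(2), where n=m0]) (simp add: card_eq_CHAR_pow[OF assms] assms(3))
  thus ?thesis by (simp add: algebra_simps)
qed

lemma brk_diff:
  fixes p m0 :: nat
  assumes "prime p" and "m0 > 0" and "card (UNIV :: ('a::{finite,field}) set) = p ^ m0"
  shows "(brk (Suc j) :: 'a poly) - brk (Suc i) = (brk j - brk i) ^ card (UNIV :: 'a set)"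
proof -
  let ?q = "card (UNIV :: 'a set)"
  have "(brk j - brk i :: 'a poly) = theta ^ (?q ^ j) - theta ^ (?q ^ i)" by (simp add: brk_def)
  hence "(brk j - brk i :: 'a poly) ^ ?q = (theta ^ (?q ^ j)) ^ ?q - (theta ^ (?q ^ i)) ^ ?q"
    using frob_minus[OF assms] by simp
  also have "\<dots> = brk (Suc j) - brk (Suc i)"
    by (simp add: brk_def power_mult[symmetric] mult.commute)
  finally show ?thesis by simp
qed

lemma prod_brk_Dcar:
  fixes p m0 :: nat
  assumes "prime p" and "m0 > 0" and "card (UNIV :: ('a::{finite,field}) set) = p ^ m0"
  shows "(\<Prod>i<j. (brk j :: 'a poly) - brk i) = Dcar j"
proof (induction j)
  case 0
  then show ?case by simp
next
  case (Suc j)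
  have "(\<Prod>i<Suc j. (brk (Suc j) :: 'a poly) - brk i)
      = (brk (Suc j) - brk 0) * (\<Prod>i<j. brk (Suc j) - brk (Suc i))"
    by (simp only: prod.lessThan_Suc_shift)
  also have "\<dots> = brk (Suc j) * (\<Prod>i<j. (brk j - brk i) ^ card (UNIV :: 'a set))"
    using brk_diff[OF assms] by (simp add: brk_def[of 0])
  also have "\<dots> = brk (Suc j) * Dcar j ^ card (UNIV :: 'a set)"
    by (simp add: prod_power_distrib[symmetric] Suc.IH)
  finally show ?case by simp
qed


definition Sg :: "nat \<Rightarrow> nat \<Rightarrow> nat" where "Sg q n = (\<Sum>s<n. q ^ s)"

lemma Sg_geom: "q \<ge> 1 \<Longrightarrow> (q - 1) * Sg q n = q ^ n - 1"
proof (induction n)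
  case 0 thus ?case by (simp add: Sg_def)
next
  case (Suc n)
  have "(q - 1) * Sg q (Suc n) = (q - 1) * Sg q n + (q - 1) * q ^ n" by (simp add: Sg_def algebra_simps)
  also have "\<dots> = q ^ n - 1 + (q - 1) * q ^ n" using Suc by simp
  also have "\<dots> = q ^ Suc n - 1" using Suc.prems
    by (simp add: algebra_simps diff_mult_distrib)
  finally show ?case .
qed

lemma Sg_add: "Sg q (a + b) = Sg q a + q ^ a * Sg q b"
  by (induction b) (simp_all add: Sg_def algebra_simps power_add)

lemma Sg_less: "q \<ge> 2 \<Longrightarrow> Sg q a < q ^ a"
proof -
  assume q: "q \<ge> 2"
  have "(q - 1) * Sg q a = q ^ a - 1" using q Sg_geom by simp
  moreover have "Sg q a \<le> (q - 1) * Sg q a" 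
  proof -
    have h: "1 \<le> q - 1" using q by simp
    show ?thesis using mult_le_mono1[OF h, of "Sg q a"] by simp
  qed
  moreover have "q ^ a > 0" using q by simp
  ultimately show ?thesis by linarith
qed

lemma Sg_ge: "Sg q n \<ge> n" if "q \<ge> 1"
proof (induction n)
  case (Suc n)
  have "q ^ n > 0" using that by simp
  moreover have "Sg q (Suc n) = Sg q n + q ^ n" by (simp add: Sg_def)
  ultimately show ?case using Suc by linarith
qed (simp add: Sg_def)

lemma Sg_Suc_mod: "q \<ge> 2 \<Longrightarrow> Sg q (Suc k) mod q = 1"
proof -
  assume q: "q \<ge> 2"
  have "Sg q (Suc k) = 1 + q * Sg q k" using Sg_add[of q 1 k] by (simp add: Sg_def)
  thus ?thesis using q by (simp add: mod_Suc)
qed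

lemma digit:
  assumes q: "q \<ge> 2"
  shows "(Sg q (Suc m) div q ^ t) mod q = (if t \<le> m then 1 else 0)"
proof (cases "t \<le> m")
  case True
  have e: "Sg q (Suc m) = Sg q t + q ^ t * Sg q (Suc (m - t))"
    using Sg_add[of q t "Suc (m - t)"] True by (simp add: Suc_diff_le)
  have "Sg q (Suc m) div q ^ t = Sg q (Suc (m - t))"
    unfolding e using Sg_less[OF q, of t] q by (simp add: div_add1_eq div_mult_self2)
  then show ?thesis using True Sg_Suc_mod[OF q] by simp
next
  case False
  have "Sg q (Suc m) < q ^ Suc m" by (rule Sg_less[OF q])
  also have "\<dots> \<le> q ^ t" using False q by (intro power_increasing) auto
  finally show ?thesis using False by simp
qed


theorem corollary2p7:
  fixes p m0 m :: nat
  assumes "prime p" and "m0 > 0" and "card (UNIV :: ('a::{finite,field}) set) = p ^ m0" and "m > 0"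
  shows "(carlitz_fact ((card (UNIV :: 'a set) ^ (m + 1) - 1) div (card (UNIV :: 'a set) - 1)) :: 'a poly)
         = det (mat (m + 1) (m + 1) (\<lambda>(i, j). (brk i :: 'a poly) ^ j))"
proof -
  let ?q = "card (UNIV :: 'a set)"
  have q2: "?q \<ge> 2"
  proof -
    have "p \<ge> 2" using assms(1) prime_ge_2_nat by blast
    moreover have "p \<le> p ^ m0" using assms(2) \<open>p \<ge> 2\<close> by (simp add: self_le_power)
    ultimately show ?thesis using assms(3) by simp
  qed
  have J: "(?q ^ (m + 1) - 1) div (?q - 1) = Sg ?q (Suc m)"
  proof -
    have "?q ^ (m + 1) - 1 = (?q - 1) * Sg ?q (Suc m)" using Sg_geom[of ?q "Suc m"] q2 by simp
    moreover have "?q - 1 > 0" using q2 by simp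
    ultimately show ?thesis by simp
  qed
  have mJ: "m \<le> Sg ?q (Suc m)" using Sg_ge[of ?q "Suc m"] q2 by simp
  have "(carlitz_fact (Sg ?q (Suc m)) :: 'a poly) = (\<Prod>t\<in>{..Sg ?q (Suc m)}. Dcar t ^ (if t \<le> m then 1 else 0))"
    unfolding carlitz_fact_def using digit[OF q2] by simp
  also have "\<dots> = (\<Prod>t\<in>{..m}. Dcar t ^ (if t \<le> m then 1 else 0))"
    by (rule prod.mono_neutral_right) (use mJ in auto)
  also have "\<dots> = (\<Prod>t\<in>{..m}. Dcar t)" by simp
  also have "\<dots> = (\<Prod>j<m+1. \<Prod>i<j. (brk j :: 'a poly) - brk i)"
    using prod_brk_Dcar[OF assms(1-3)] by (simp add: lessThan_Suc_atMost)
  also have "\<dots> = det (mat (m + 1) (m + 1) (\<lambda>(i, j). (brk i :: 'a poly) ^ j))"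
    by (rule vandermonde[symmetric])
  finally show ?thesis using J by simp
qed

end
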